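(* Let $\Gamma$ be a finitely generated group which is either amenable or of finite asymptotic dimension. Then $\Gamma$ is weighted hyperfinite, i.e. its Cayley graph with respect to any finite symmetric generating set is weighted hyperfinite.
   Context: A connected infinite graph $G$ with bounded vertex degrees is weighted hyperfinite if for every $\epsilon>0$ there is $K_\epsilon>0$ such that for every finite induced subgraph $L\subseteq G$ and every function $w:V(L)\to[0,\infty)$ there is a set $M\subseteq V(L)$ with $\sum_{x\in M}w(x)\le\epsilon\sum_{x\in V(L)}w(x)$ such that every connected component of the graph obtained from $L$ by deleting $M$ (and incident edges) has at most $K_\epsilon$ vertices. (This property is invariant under quasi-isometry, so it is independent of the generating set.) The Cayley graph of $\Gamma$ w.r.t. a finite symmetric generating set $S$ has vertex set $\Gamma$, with $x,y$ adjacent iff $x=sy$ for some $s\in S$. A graph $G$ has asymptotic dimension at most $d$ if for every $r>0$ there is $R=R(r)$ and vertex-disjoint induced subgraphs $\mathcal U_1,\dots,\mathcal U_d$ covering $V(G)$ such that for each $i$, each connected component of $\mathcal U_i$ has diameter at most $R$ and distinct components of $\mathcal U_i$ are at distance at least $r$ in $G$; a group has finite asymptotic dimension if its Cayley graph does (a quasi-isometry invariant). *)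

theory Defs
  imports Complex_Main "HOL-Algebra.Generated_Groups" "HOL-Algebra.Coset"
begin

definition reach_in :: "('a \<Rightarrow> 'a \<Rightarrow> bool) \<Rightarrow> 'a set \<Rightarrow> 'a \<Rightarrow> 'a \<Rightarrow> bool" where
  "reach_in E A = (\<lambda>a b. a \<in> A \<and> b \<in> A \<and> E a b)\<^sup>*\<^sup>*"

definition components :: "('a \<Rightarrow> 'a \<Rightarrow> bool) \<Rightarrow> 'a set \<Rightarrow> 'a set set" where
  "components E A = {{y. y \<in> A \<and> reach_in E A x y} | x. x \<in> A}"

definition gdist :: "('a \<Rightarrow> 'a \<Rightarrow> bool) \<Rightarrow> 'a \<Rightarrow> 'a \<Rightarrow> nat" where
  "gdist E x y = (LEAST n. (E ^^ n) x y)"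

definition weighted_hyperfinite :: "'a set \<Rightarrow> ('a \<Rightarrow> 'a \<Rightarrow> bool) \<Rightarrow> bool" where
  "weighted_hyperfinite V E \<longleftrightarrow>
    (\<forall>\<epsilon>::real. \<epsilon> > 0 \<longrightarrow> (\<exists>K::nat. K > 0 \<and>
      (\<forall>L. finite L \<and> L \<subseteq> V \<longrightarrow> (\<forall>w::'a \<Rightarrow> real. (\<forall>x\<in>L. 0 \<le> w x) \<longrightarrow>
        (\<exists>M \<subseteq> L. (\<Sum>x\<in>M. w x) \<le> \<epsilon> * (\<Sum>x\<in>L. w x) \<and>
                 (\<forall>C \<in> components E (L - M). card C \<le> K))))))"

definition asdim_le :: "'a set \<Rightarrow> ('a \<Rightarrow> 'a \<Rightarrow> bool) \<Rightarrow> nat \<Rightarrow> bool" where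
  "asdim_le V E d \<longleftrightarrow>
    (\<forall>r::nat. r > 0 \<longrightarrow> (\<exists>R::nat. \<exists>U :: nat \<Rightarrow> 'a set.
       (\<Union>i<d. U i) = V \<and>
       (\<forall>i<d. \<forall>j<d. i \<noteq> j \<longrightarrow> U i \<inter> U j = {}) \<and>
       (\<forall>i<d. (\<forall>C \<in> components E (U i). \<forall>x\<in>C. \<forall>y\<in>C. gdist E x y \<le> R) \<and>
              (\<forall>C1 \<in> components E (U i). \<forall>C2 \<in> components E (U i). C1 \<noteq> C2 \<longrightarrow>
                  (\<forall>x\<in>C1. \<forall>y\<in>C2. r \<le> gdist E x y)))))"

definition cayley_adj :: "('a, 'b) monoid_scheme \<Rightarrow> 'a set \<Rightarrow> 'a \<Rightarrow> 'a \<Rightarrow> bool" where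
  "cayley_adj G S x y \<longleftrightarrow> x \<in> carrier G \<and> y \<in> carrier G \<and> (\<exists>s\<in>S. x = s \<otimes>\<^bsub>G\<^esub> y)"

definition fin_sym_gen_set :: "('a, 'b) monoid_scheme \<Rightarrow> 'a set \<Rightarrow> bool" where
  "fin_sym_gen_set G S \<longleftrightarrow> finite S \<and> S \<subseteq> carrier G \<and> (\<forall>s\<in>S. inv\<^bsub>G\<^esub> s \<in> S)
     \<and> generate G S = carrier G"

definition finitely_generated :: "('a, 'b) monoid_scheme \<Rightarrow> bool" where
  "finitely_generated G \<longleftrightarrow> (\<exists>S. finite S \<and> S \<subseteq> carrier G \<and> generate G S = carrier G)"

definition amenable :: "('a, 'b) monoid_scheme \<Rightarrow> bool" where
  "amenable G \<longleftrightarrow> (\<exists>\<mu> :: 'a set \<Rightarrow> real.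
     \<mu> (carrier G) = 1 \<and>
     (\<forall>A. A \<subseteq> carrier G \<longrightarrow> 0 \<le> \<mu> A) \<and>
     (\<forall>A B. A \<subseteq> carrier G \<and> B \<subseteq> carrier G \<and> A \<inter> B = {} \<longrightarrow> \<mu> (A \<union> B) = \<mu> A + \<mu> B) \<and>
     (\<forall>g\<in>carrier G. \<forall>A. A \<subseteq> carrier G \<longrightarrow> \<mu> (g <#\<^bsub>G\<^esub> A) = \<mu> A))"

definition finite_asdim :: "('a, 'b) monoid_scheme \<Rightarrow> bool" where
  "finite_asdim G \<longleftrightarrow> (\<exists>S d. fin_sym_gen_set G S \<and> asdim_le (carrier G) (cayley_adj G S) d)"

end

theory Submission
  imports Defs "HOL-Library.Diagonal_Subsequence" "HOL-Library.Countable_Set"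
begin

lemma hall_finite:
  assumes "finite I" "\<forall>i\<in>I. finite (A i)"
    and "\<forall>J\<subseteq>I. card J \<le> card (\<Union>(A ` J))"
  shows "\<exists>f. (\<forall>i\<in>I. f i \<in> A i) \<and> inj_on f I"
  using assms
proof (induction "card I" arbitrary: I A rule: less_induct)
  case less
  show ?case
  proof (cases "I = {}")
    case True then show ?thesis by auto
  next
    case nonempty: False
    show ?thesis
    proof (cases "\<exists>J. J \<subseteq> I \<and> J \<noteq> {} \<and> J \<noteq> I \<and> card J = card (\<Union>(A ` J))")
      case True
      then obtain J where J: "J \<subseteq> I" "J \<noteq> {}" "J \<noteq> I" "card J = card (\<Union>(A ` J))" by blast
      have fJ: "finite J" using J(1) less.prems(1) finite_subset by blast
      have cJ: "card J < card I" using J(1,3) less.prems(1) by (meson psubsetI psubset_card_mono)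
      have "\<exists>f. (\<forall>i\<in>J. f i \<in> A i) \<and> inj_on f J"
        apply (rule less.hyps[OF cJ fJ, of A])
        using J(1) less.prems by auto
      then obtain f1 where f1: "\<forall>i\<in>J. f1 i \<in> A i" "inj_on f1 J" by blast
      define U where "U = \<Union>(A ` J)"
      have fU: "finite U" unfolding U_def using fJ J(1) less.prems(2) by auto
      define A2 where "A2 = (\<lambda>i. A i - U)"
      have cIJ: "card (I - J) < card I" using J(1,2) less.prems(1)
      proof -
        have "card (I - J) = card I - card J" using J(1) fJ by (simp add: card_Diff_subset)
        moreover have "card J > 0" using J(2) fJ by auto
        moreover have "card J \<le> card I" using J(1) less.prems(1) by (simp add: card_mono)
        ultimately show ?thesis by linarith
      qed
      have H2: "\<forall>K\<subseteq>I - J. card K \<le> card (\<Union>(A2 ` K))"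
      proof (intro allI impI)
        fix K assume K: "K \<subseteq> I - J"
        have fK: "finite K" using K less.prems(1) finite_subset by blast
        have "K \<union> J \<subseteq> I" using K J(1) by auto
        then have "card (K \<union> J) \<le> card (\<Union>(A ` (K \<union> J)))" using less.prems(3) by blast
        moreover have "card (K \<union> J) = card K + card J" using K fK fJ by (subst card_Un_disjoint) auto
        moreover have "\<Union>(A ` (K \<union> J)) = \<Union>(A2 ` K) \<union> U" unfolding A2_def U_def by auto
        moreover have "card (\<Union>(A2 ` K) \<union> U) = card (\<Union>(A2 ` K)) + card U"
          apply (rule card_Un_disjoint)
          using fK K less.prems(2) fU unfolding A2_def by auto
        ultimately show "card K \<le> card (\<Union>(A2 ` K))" using J(4) unfolding U_def by simp
      qed
      have "\<exists>f. (\<forall>i\<in>I - J. f i \<in> A2 i) \<and> inj_on f (I - J)"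
        apply (rule less.hyps[OF cIJ, of A2])
        using less.prems(1) apply simp
        using less.prems(2) apply (simp add: A2_def)
        using H2 by blast
      then obtain f2 where f2: "\<forall>i\<in>I - J. f2 i \<in> A2 i" "inj_on f2 (I - J)" by blast
      define f where "f = (\<lambda>i. if i \<in> J then f1 i else f2 i)"
      have "\<forall>i\<in>I. f i \<in> A i" using f1 f2 unfolding f_def A2_def by auto
      moreover have "inj_on f I"
      proof (rule inj_onI)
        fix x y assume xy: "x \<in> I" "y \<in> I" "f x = f y"
        show "x = y"
        proof (cases "x \<in> J"; cases "y \<in> J")
          assume "x \<in> J" "y \<in> J" then show ?thesis using xy f1(2) unfolding f_def by (auto dest: inj_onD)
        next
          assume "x \<notin> J" "y \<notin> J" then show ?thesis using xy f2(2) unfolding f_def by (auto dest: inj_onD)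
        next
          assume a: "x \<in> J" "y \<notin> J"
          then have "f x \<in> U" using f1 unfolding f_def U_def by auto
          moreover have "f y \<notin> U" using a xy(1,2) f2 unfolding f_def A2_def by auto
          ultimately show ?thesis using xy by simp
        next
          assume a: "x \<notin> J" "y \<in> J"
          then have "f y \<in> U" using f1 unfolding f_def U_def by auto
          moreover have "f x \<notin> U" using a xy(1,2) f2 unfolding f_def A2_def by auto
          ultimately show ?thesis using xy by simp
        qed
      qed
      ultimately show ?thesis by blast
    next
      case False
      then have strict: "\<And>J. J \<subseteq> I \<Longrightarrow> J \<noteq> {} \<Longrightarrow> J \<noteq> I \<Longrightarrow> card J < card (\<Union>(A ` J))"
        using less.prems(3) by (meson le_neq_implies_less)
      obtain i0 where i0: "i0 \<in> I" using nonempty by blast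
      have "{i0} \<subseteq> I" using i0 by simp
      then have "card {i0} \<le> card (\<Union>(A ` {i0}))" using less.prems(3) by blast
      then have "card {i0} \<le> card (A i0)" by simp
      then have "A i0 \<noteq> {}" by auto
      then obtain x where x: "x \<in> A i0" by blast
      define A2 where "A2 = (\<lambda>i. A i - {x})"
      have cI: "card (I - {i0}) < card I" using i0 less.prems(1) by (meson card_Diff1_less)
      have H2: "\<forall>K\<subseteq>I - {i0}. card K \<le> card (\<Union>(A2 ` K))"
      proof (intro allI impI)
        fix K assume K: "K \<subseteq> I - {i0}"
        show "card K \<le> card (\<Union>(A2 ` K))"
        proof (cases "K = {}")
          case True then show ?thesis by simp
        next
          case False
          have fK: "finite K" using K less.prems(1) finite_subset by blast
          have "K \<noteq> I" using K i0 by auto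
          then have "card K < card (\<Union>(A ` K))" using strict K False by auto
          moreover have "\<Union>(A2 ` K) = \<Union>(A ` K) - {x}" unfolding A2_def by auto
          moreover have "card (\<Union>(A ` K) - {x}) \<ge> card (\<Union>(A ` K)) - 1" by (metis One_nat_def card_Diff_singleton_if diff_le_self order_refl)
          ultimately show ?thesis by simp
        qed
      qed
      have "\<exists>f. (\<forall>i\<in>I - {i0}. f i \<in> A2 i) \<and> inj_on f (I - {i0})"
        apply (rule less.hyps[OF cI, of A2])
        using less.prems(1) apply simp
        using less.prems(2) apply (simp add: A2_def)
        using H2 by blast
      then obtain f2 where f2: "\<forall>i\<in>I - {i0}. f2 i \<in> A2 i" "inj_on f2 (I - {i0})" by blast
      define f where "f = f2(i0 := x)"
      have "\<forall>i\<in>I. f i \<in> A i" using f2 x unfolding f_def A2_def by auto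
      moreover have "inj_on f I"
        unfolding f_def using f2 unfolding A2_def inj_on_def by (smt (verit) DiffD2 DiffI fun_upd_other fun_upd_same singletonD singletonI)
      ultimately show ?thesis by blast
    qed
  qed
qed


locale cay = group G for G (structure) +
  fixes S
  assumes fsg: "fin_sym_gen_set G S"
begin

abbreviation "E \<equiv> cayley_adj G S"

lemma S_fin: "finite S" and S_sub: "S \<subseteq> carrier G" and S_inv: "\<And>s. s \<in> S \<Longrightarrow> inv s \<in> S"
  and S_gen: "generate G S = carrier G"
  using fsg unfolding fin_sym_gen_set_def by auto

lemma E_carr: "E x y \<Longrightarrow> x \<in> carrier G \<and> y \<in> carrier G"
  unfolding cayley_adj_def by auto

lemma E_sym: assumes "E x y" shows "E y x"
proof -
  obtain s where s: "s \<in> S" "x = s \<otimes> y" "x \<in> carrier G" "y \<in> carrier G"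
    using assms unfolding cayley_adj_def by auto
  have sc: "s \<in> carrier G" using s S_sub by auto
  have "y = inv s \<otimes> x" using s sc by (simp add: m_assoc[symmetric] )
  then show ?thesis using s S_inv unfolding cayley_adj_def by auto
qed

lemma Epow_sym: "(E ^^ n) x y \<Longrightarrow> (E ^^ n) y x"
proof (induction n arbitrary: x y)
  case 0 then show ?case by auto
next
  case (Suc n)
  then obtain z where "(E ^^ n) x z" "E z y" by (auto elim: relpowp_Suc_E)
  then show ?case using Suc.IH E_sym relpowp_Suc_I2 by metis
qed

lemma Epow_carr: "(E ^^ n) x y \<Longrightarrow> x \<in> carrier G \<Longrightarrow> y \<in> carrier G"
proof (induction n arbitrary: y)
  case 0 then show ?case by auto
next
  case (Suc n)
  then obtain z where "(E ^^ n) x z" "E z y" by (auto elim: relpowp_Suc_E)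
  then show ?case using E_carr by blast
qed

lemma E_right: "E x y \<Longrightarrow> z \<in> carrier G \<Longrightarrow> E (x \<otimes> z) (y \<otimes> z)"
  unfolding cayley_adj_def using S_sub by (auto simp: m_assoc) (metis m_assoc subsetD)

lemma Epow_right: "(E ^^ n) x y \<Longrightarrow> z \<in> carrier G \<Longrightarrow> (E ^^ n) (x \<otimes> z) (y \<otimes> z)"
proof (induction n arbitrary: y)
  case 0 then show ?case by auto
next
  case (Suc n)
  then obtain w where "(E ^^ n) x w" "E w y" by (auto elim: relpowp_Suc_E)
  then show ?case using Suc E_right relpowp_Suc_I by metis
qed

lemma conn_one: "g \<in> carrier G \<Longrightarrow> \<exists>k. (E ^^ k) g \<one>"
proof -
  assume "g \<in> carrier G"
  then have "g \<in> generate G S" using S_gen by simp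
  then show ?thesis
  proof (induction rule: generate.induct)
    case one then show ?case by (metis relpowp_0_I)
  next
    case (incl h)
    then have "E h \<one>" using S_sub unfolding cayley_adj_def by force
    then show ?case by (metis relpowp_1)
  next
    case (inv h)
    then have "E (inv h) \<one>" using S_sub S_inv unfolding cayley_adj_def by force
    then show ?case by (metis relpowp_1)
  next
    case (eng h1 h2)
    then obtain k1 k2 where k: "(E ^^ k1) h1 \<one>" "(E ^^ k2) h2 \<one>" by blast
    have c: "h1 \<in> carrier G" "h2 \<in> carrier G" using eng.hyps S_gen by auto
    have "(E ^^ k1) (h1 \<otimes> h2) (\<one> \<otimes> h2)" using Epow_right[OF k(1) c(2)] .
    then have "(E ^^ k1) (h1 \<otimes> h2) h2" using c by simp
    then show ?case using k(2) relpowp_trans by metis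
  qed
qed

lemma conn: "x \<in> carrier G \<Longrightarrow> y \<in> carrier G \<Longrightarrow> \<exists>k. (E ^^ k) x y"
  using conn_one[of x] conn_one[of y] Epow_sym relpowp_trans by metis

lemma sphere_fin: "finite {y. (E ^^ n) a y} \<and> card {y. (E ^^ n) a y} \<le> card S ^ n"
proof (induction n)
  case 0 then show ?case by simp
next
  case (Suc n)
  let ?B = "{y. (E ^^ n) a y}"
  have nb: "\<And>z. {y. E z y} \<subseteq> (\<lambda>s. inv s \<otimes> z) ` S"
  proof
    fix z y assume "y \<in> {y. E z y}"
    then have "E y z" using E_sym by auto
    then obtain s where s: "s \<in> S" "y = s \<otimes> z" "z \<in> carrier G" unfolding cayley_adj_def by auto
    then have "inv s \<in> S" "y = inv (inv s) \<otimes> z" using S_inv S_sub by auto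
    then show "y \<in> (\<lambda>s. inv s \<otimes> z) ` S" by blast
  qed
  have fz: "\<And>z. finite {y. E z y} \<and> card {y. E z y} \<le> card S"
    using nb S_fin by (meson card_image_le finite_imageI finite_subset order_trans card_mono)
  have eq: "{y. (E ^^ Suc n) a y} = (\<Union>z\<in>?B. {y. E z y})"
    by (auto elim: relpowp_Suc_E intro: relpowp_Suc_I)
  have "finite (\<Union>z\<in>?B. {y. E z y})" using Suc fz by blast
  moreover have "card (\<Union>z\<in>?B. {y. E z y}) \<le> (\<Sum>z\<in>?B. card {y. E z y})"
    using Suc by (simp add: card_UN_le)
  moreover have "(\<Sum>z\<in>?B. card {y. E z y}) \<le> (\<Sum>z\<in>?B. card S)"
    using fz by (meson sum_mono)
  moreover have "(\<Sum>z\<in>?B. card S) = card ?B * card S" by simp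
  moreover have "card ?B * card S \<le> card S ^ n * card S" using Suc by (simp add: mult_le_mono1)
  ultimately have "card (\<Union>z\<in>?B. {y. E z y}) \<le> card S ^ n * card S" by linarith
  then have "card (\<Union>z\<in>?B. {y. E z y}) \<le> card S ^ Suc n" by (simp add: mult.commute)
  then show ?case unfolding eq using \<open>finite (\<Union>z\<in>?B. {y. E z y})\<close> by simp
qed

definition ball where "ball a \<rho> = {y. \<exists>j\<le>\<rho>. (E ^^ j) a y}"

lemma ball_fin: "finite (ball a \<rho>) \<and> card (ball a \<rho>) \<le> (\<Sum>j\<le>\<rho>. card S ^ j)"
proof -
  have eq: "ball a \<rho> = (\<Union>j\<in>{..\<rho>}. {y. (E ^^ j) a y})" unfolding ball_def by auto
  have "finite (ball a \<rho>)" unfolding eq using sphere_fin by blast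
  moreover have "card (ball a \<rho>) \<le> (\<Sum>j\<le>\<rho>. card {y. (E ^^ j) a y})" unfolding eq
    by (rule card_UN_le) simp
  moreover have "(\<Sum>j\<le>\<rho>. card {y. (E ^^ j) a y}) \<le> (\<Sum>j\<le>\<rho>. card S ^ j)"
    using sphere_fin by (simp add: sum_mono)
  ultimately show ?thesis by linarith
qed

end

lemma components_sub: "C \<in> components E A \<Longrightarrow> C \<subseteq> A"
  unfolding components_def by auto

lemma reach_in_mono: assumes "reach_in E A x y" "A \<subseteq> B" shows "reach_in E B x y"
  using assms(1) unfolding reach_in_def
proof (induction rule: rtranclp_induct)
  case base then show ?case by simp
next
  case (step y z)
  then have "(\<lambda>a b. a \<in> B \<and> b \<in> B \<and> E a b) y z" using assms(2) by blast
  then show ?case by (rule rtranclp.rtrancl_into_rtrancl[OF step.IH])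
qed

lemma reach_in_split:
  assumes "\<forall>x\<in>A1. \<forall>y\<in>A2. \<not> E x y \<and> \<not> E y x" "x \<in> A1" "reach_in E (A1 \<union> A2) x y"
  shows "reach_in E A1 x y \<and> y \<in> A1"
  using assms(3) unfolding reach_in_def
proof (induction rule: rtranclp_induct)
  case base then show ?case using assms(2) by auto
next
  case (step y z)
  then have z: "z \<in> A1" using assms(1) by blast
  have "(\<lambda>a b. a \<in> A1 \<and> b \<in> A1 \<and> E a b) y z" using z step by simp
  then show ?case using z rtranclp.rtrancl_into_rtrancl[OF conjunct1[OF step.IH]] by simp
qed

lemma components_split:
  assumes "\<forall>x\<in>A1. \<forall>y\<in>A2. \<not> E x y \<and> \<not> E y x" "C \<in> components E (A1 \<union> A2)"
  shows "C \<in> components E A1 \<or> C \<in> components E A2"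
proof -
  have gen: "C \<in> components E B1"
    if ab: "\<forall>x\<in>B1. \<forall>y\<in>B2. \<not> E x y \<and> \<not> E y x" and x: "x \<in> B1"
      and C: "C = {y. y \<in> B1 \<union> B2 \<and> reach_in E (B1 \<union> B2) x y}" for B1 B2 x
  proof -
    have "C = {y. y \<in> B1 \<and> reach_in E B1 x y}"
    proof
      show "C \<subseteq> {y. y \<in> B1 \<and> reach_in E B1 x y}"
      proof
        fix y assume "y \<in> C"
        then have "reach_in E (B1 \<union> B2) x y" using C by simp
        then show "y \<in> {y. y \<in> B1 \<and> reach_in E B1 x y}" using reach_in_split[OF ab x] by simp
      qed
      show "{y. y \<in> B1 \<and> reach_in E B1 x y} \<subseteq> C"
      proof
        fix y assume y: "y \<in> {y. y \<in> B1 \<and> reach_in E B1 x y}"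
        have sub: "B1 \<subseteq> B1 \<union> B2" by simp
        have "reach_in E (B1 \<union> B2) x y" using y reach_in_mono[OF _ sub] by simp
        then show "y \<in> C" using y C by simp
      qed
    qed
    moreover have "{y. y \<in> B1 \<and> reach_in E B1 x y} \<in> components E B1"
      unfolding components_def using x by blast
    ultimately show ?thesis by simp
  qed
  obtain x where x: "x \<in> A1 \<union> A2" "C = {y. y \<in> A1 \<union> A2 \<and> reach_in E (A1 \<union> A2) x y}"
    using assms(2) unfolding components_def by auto
  show ?thesis
  proof (cases "x \<in> A1")
    case True
    then show ?thesis using gen[OF assms(1) True x(2)] by simp
  next
    case False
    then have x2: "x \<in> A2" using x by auto
    have a1: "\<forall>x\<in>A2. \<forall>y\<in>A1. \<not> E x y \<and> \<not> E y x" using assms(1) by blast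
    have C2: "C = {y. y \<in> A2 \<union> A1 \<and> reach_in E (A2 \<union> A1) x y}"
      using x(2) by (simp add: Un_commute)
    show ?thesis using gen[OF a1 x2 C2] by simp
  qed
qed

context cay begin

definition bd where "bd F = {x\<in>F. \<exists>s\<in>S. s \<otimes> x \<notin> F}"

definition rt where "rt g B = (\<lambda>x. x \<otimes> g) ` B"

lemma count_sum:
  fixes w :: "'a \<Rightarrow> real"
  assumes L: "finite L" "L \<subseteq> carrier G" and B: "finite B" "B \<subseteq> carrier G"
    and T: "finite T" "\<And>x b. x \<in> L \<Longrightarrow> b \<in> B \<Longrightarrow> inv b \<otimes> x \<in> T" "T \<subseteq> carrier G"
  shows "(\<Sum>g\<in>T. sum w (rt g B \<inter> L)) = real (card B) * sum w L"
proof -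
  have "(\<Sum>g\<in>T. sum w (rt g B \<inter> L)) = (\<Sum>g\<in>T. \<Sum>x\<in>L. if x \<in> rt g B then w x else 0)"
  proof (rule sum.cong[OF refl])
    fix g assume "g \<in> T" show "sum w (rt g B \<inter> L) = (\<Sum>x\<in>L. if x \<in> rt g B then w x else 0)"
      by (subst Int_commute) (rule sum.inter_restrict[OF L(1)])
  qed
  also have "\<dots> = (\<Sum>x\<in>L. \<Sum>g\<in>T. if x \<in> rt g B then w x else 0)" by (rule sum.swap)
  also have "\<dots> = (\<Sum>x\<in>L. w x * real (card B))"
  proof (intro sum.cong refl)
    fix x assume x: "x \<in> L"
    have xc: "x \<in> carrier G" using x L by auto
    have "{g\<in>T. x \<in> rt g B} = (\<lambda>b. inv b \<otimes> x) ` B"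
    proof
      show "{g\<in>T. x \<in> rt g B} \<subseteq> (\<lambda>b. inv b \<otimes> x) ` B"
      proof
        fix g assume "g \<in> {g\<in>T. x \<in> rt g B}"
        then obtain b where b: "b \<in> B" "x = b \<otimes> g" "g \<in> carrier G" using T(3) unfolding rt_def by auto
        have bc: "b \<in> carrier G" using b B by auto
        then have "g = inv b \<otimes> x" using b by (simp add: m_assoc[symmetric])
        then show "g \<in> (\<lambda>b. inv b \<otimes> x) ` B" using b by auto
      qed
    next
      show "(\<lambda>b. inv b \<otimes> x) ` B \<subseteq> {g\<in>T. x \<in> rt g B}"
      proof
        fix g assume "g \<in> (\<lambda>b. inv b \<otimes> x) ` B"
        then obtain b where b: "b \<in> B" "g = inv b \<otimes> x" by auto
        have bc: "b \<in> carrier G" using b B by auto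
        then have "x = b \<otimes> g" using b xc by (simp add: m_assoc[symmetric])
        then show "g \<in> {g\<in>T. x \<in> rt g B}" using b T(2)[OF x b(1)] unfolding rt_def by auto
      qed
    qed
    moreover have "inj_on (\<lambda>b. inv b \<otimes> x) B"
    proof (rule inj_onI)
      fix b b' assume bb: "b \<in> B" "b' \<in> B" "inv b \<otimes> x = inv b' \<otimes> x"
      have bc: "b \<in> carrier G" "b' \<in> carrier G" using bb B by auto
      then have "inv b = inv b'" using bb(3) xc by simp
      then have "inv (inv b) = inv (inv b')" by simp
      then show "b = b'" using bc by simp
    qed
    ultimately have c: "card {g\<in>T. x \<in> rt g B} = card B" by (simp add: card_image)
    have "(\<Sum>g\<in>T. if x \<in> rt g B then w x else 0) = (\<Sum>g\<in>{g\<in>T. x \<in> rt g B}. w x)"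
      by (rule sum.inter_filter[symmetric, OF T(1)])
    also have "\<dots> = w x * real (card B)" using c by simp
    finally show "(\<Sum>g\<in>T. if x \<in> rt g B then w x else 0) = w x * real (card B)" .
  qed
  also have "\<dots> = real (card B) * sum w L" by (simp add: sum_distrib_right mult.commute)
  finally show ?thesis .
qed

lemma folner_hyp:
  fixes \<delta> :: real
  assumes F: "finite F" "F \<subseteq> carrier G" "F \<noteq> {}" and bdF: "real (card (bd F)) \<le> \<delta> * real (card F)"
  shows "finite L \<Longrightarrow> L \<subseteq> carrier G \<Longrightarrow> (\<forall>x\<in>L. 0 \<le> w x) \<Longrightarrow>
     \<exists>M\<subseteq>L. sum w M \<le> \<delta> * sum w L \<and> (\<forall>C\<in>components E (L - M). card C \<le> card F)"
proof (induction "card L" arbitrary: L rule: less_induct)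
  case less
  show ?case
  proof (cases "L = {}")
    case True
    then show ?thesis unfolding components_def by auto
  next
    case False
    note L = less.prems
    define T where "T = (\<Union>x\<in>L. \<Union>f\<in>F. {inv f \<otimes> x})"
    have Tfin: "finite T" unfolding T_def using L(1) F(1) by simp
    have Tc: "T \<subseteq> carrier G" unfolding T_def using L(2) F(2) by (auto simp: subset_iff)
    have Tin: "\<And>x b. x \<in> L \<Longrightarrow> b \<in> F \<Longrightarrow> inv b \<otimes> x \<in> T" unfolding T_def by auto
    have bdsub: "bd F \<subseteq> F" unfolding bd_def by auto
    have s1: "(\<Sum>g\<in>T. sum w (rt g (bd F) \<inter> L)) = real (card (bd F)) * sum w L"
    proof -
      have "finite (bd F)" by (rule finite_subset[OF bdsub F(1)])
      moreover have "bd F \<subseteq> carrier G" using bdsub F(2) by blast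
      moreover have "\<And>x b. x \<in> L \<Longrightarrow> b \<in> bd F \<Longrightarrow> inv b \<otimes> x \<in> T" using Tin bdsub by blast
      ultimately show ?thesis by (rule count_sum[OF L(1,2) _ _ Tfin _ Tc])
    qed
    have s2: "(\<Sum>g\<in>T. sum w (rt g F \<inter> L)) = real (card F) * sum w L"
      using count_sum[OF L(1,2) F(1,2) Tfin Tin Tc] .
    have W: "sum w L \<ge> 0" using L(3) by (intro sum_nonneg) blast
    have "\<exists>g\<in>T. sum w (rt g (bd F) \<inter> L) \<le> \<delta> * sum w (rt g F \<inter> L)"
    proof (rule ccontr)
      assume "\<not> ?thesis"
      then have lt: "\<And>g. g \<in> T \<Longrightarrow> \<delta> * sum w (rt g F \<inter> L) < sum w (rt g (bd F) \<inter> L)" by auto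
      have Tne: "T \<noteq> {}" using False F(3) unfolding T_def by auto
      have "(\<Sum>g\<in>T. \<delta> * sum w (rt g F \<inter> L)) < (\<Sum>g\<in>T. sum w (rt g (bd F) \<inter> L))"
        using sum_strict_mono[OF Tfin Tne lt] by simp
      moreover have "(\<Sum>g\<in>T. \<delta> * sum w (rt g F \<inter> L)) = \<delta> * (\<Sum>g\<in>T. sum w (rt g F \<inter> L))"
        by (simp add: sum_distrib_left)
      ultimately have "\<delta> * (real (card F) * sum w L) < real (card (bd F)) * sum w L"
        using s1 s2 by simp
      moreover have "real (card (bd F)) * sum w L \<le> \<delta> * real (card F) * sum w L"
        by (rule mult_right_mono[OF bdF W])
      moreover have "\<delta> * real (card F) * sum w L = \<delta> * (real (card F) * sum w L)" by (rule mult.assoc)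
      ultimately show False by linarith
    qed
    then obtain g where g: "g \<in> T" and gle: "sum w (rt g (bd F) \<inter> L) \<le> \<delta> * sum w (rt g F \<inter> L)"
      by blast
    define P where "P = rt g F \<inter> L"
    define Q where "Q = rt g (bd F) \<inter> L"
    define L' where "L' = L - P"
    have gc: "g \<in> carrier G" using g Tc by auto
    obtain x0 f0 where x0: "x0 \<in> L" "f0 \<in> F" "g = inv f0 \<otimes> x0" using g unfolding T_def by auto
    have f0c: "f0 \<in> carrier G" using x0 F(2) by auto
    have x0c: "x0 \<in> carrier G" using x0 L(2) by auto
    have "x0 = f0 \<otimes> g" using x0 f0c x0c by (simp add: m_assoc[symmetric])
    then have "x0 \<in> P" unfolding P_def rt_def using x0 by auto
    then have PL: "P \<noteq> {}" "P \<subseteq> L" unfolding P_def by auto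
    have QP: "Q \<subseteq> P" unfolding Q_def P_def rt_def using bdsub by auto
    have finP: "finite P" using PL(2) L(1) finite_subset by blast
    have cL': "card L' < card L"
    proof -
      have "card L' = card L - card P" unfolding L'_def using PL(2) finP by (simp add: card_Diff_subset)
      moreover have "card P > 0" using finP PL(1) by auto
      moreover have "card P \<le> card L" using PL(2) L(1) by (rule card_mono[rotated])
      ultimately show ?thesis by linarith
    qed
    have L'p: "finite L'" "L' \<subseteq> carrier G" "\<forall>x\<in>L'. 0 \<le> w x" unfolding L'_def using L by auto
    obtain M' where M': "M' \<subseteq> L'" "sum w M' \<le> \<delta> * sum w L'"
        "\<forall>C\<in>components E (L' - M'). card C \<le> card F"
      using less.hyps[OF cL' L'p] by blast
    define M where "M = M' \<union> Q"
    have MsubL: "M \<subseteq> L" unfolding M_def using M'(1) QP PL unfolding L'_def by auto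
    have finM': "finite M'" using M'(1) L'p(1) finite_subset by blast
    have finQ: "finite Q" using QP finP finite_subset by blast
    have "sum w M = sum w M' + sum w Q" unfolding M_def
      by (rule sum.union_disjoint[OF finM' finQ]) (use M'(1) QP in \<open>auto simp: L'_def\<close>)
    moreover have "sum w L = sum w L' + sum w P"
    proof -
      have "L = L' \<union> P" using PL unfolding L'_def by auto
      moreover have "finite L'" using L'p by auto
      moreover have "L' \<inter> P = {}" unfolding L'_def by auto
      ultimately show ?thesis using sum.union_disjoint[OF _ finP, of L' w] by simp
    qed
    moreover have "sum w Q \<le> \<delta> * sum w P" using gle unfolding P_def Q_def .
    ultimately have wM: "sum w M \<le> \<delta> * sum w L" using M'(2) by (simp add: distrib_left)
    have LM: "L - M = (P - Q) \<union> (L' - M')" unfolding M_def L'_def using PL QP M'(1) unfolding L'_def by auto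
    have noedge: "\<forall>y\<in>P - Q. \<forall>z\<in>L' - M'. \<not> E y z \<and> \<not> E z y"
    proof (intro ballI)
      fix y z assume y: "y \<in> P - Q" and z: "z \<in> L' - M'"
      obtain f where f: "f \<in> F" "y = f \<otimes> g" using y unfolding P_def rt_def by auto
      have fnb: "f \<notin> bd F" using y f unfolding Q_def P_def rt_def by auto
      have fc: "f \<in> carrier G" using f F(2) by auto
      have "\<not> E z y"
      proof
        assume "E z y"
        then obtain s where s: "s \<in> S" "z = s \<otimes> y" unfolding cayley_adj_def by auto
        have sc: "s \<in> carrier G" using s S_sub by auto
        have "s \<otimes> f \<in> F" using fnb f s unfolding bd_def by auto
        moreover have "z = (s \<otimes> f) \<otimes> g" using s f sc fc gc by (simp add: m_assoc)
        ultimately have "z \<in> P" using z unfolding P_def rt_def L'_def by auto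
        then show False using z unfolding L'_def by auto
      qed
      then show "\<not> E y z \<and> \<not> E z y" using E_sym by blast
    qed
    have comps: "\<forall>C\<in>components E (L - M). card C \<le> card F"
    proof
      fix C assume "C \<in> components E (L - M)"
      then have "C \<in> components E (P - Q) \<or> C \<in> components E (L' - M')"
        using components_split[OF noedge] unfolding LM by blast
      then show "card C \<le> card F"
      proof
        assume "C \<in> components E (P - Q)"
        then have "C \<subseteq> rt g F" using components_sub unfolding P_def by blast
        then have "card C \<le> card (rt g F)" using F(1) unfolding rt_def by (simp add: card_mono)
        also have "\<dots> \<le> card F" unfolding rt_def using F(1) by (rule card_image_le)
        finally show ?thesis .
      next
        assume "C \<in> components E (L' - M')"
        then show ?thesis using M'(3) by blast
      qed
    qed
    show ?thesis using MsubL wM comps by blast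
  qed
qed

end

context cay begin

definition smul where "smul X F = (\<lambda>(x,f). x \<otimes> f) ` (X \<times> F)"

lemma smul_fin: "finite X \<Longrightarrow> finite F \<Longrightarrow> finite (smul X F)"
  unfolding smul_def by simp

lemma smul_carr: "X \<subseteq> carrier G \<Longrightarrow> F \<subseteq> carrier G \<Longrightarrow> smul X F \<subseteq> carrier G"
  unfolding smul_def by auto

lemma smul_one: "F \<subseteq> carrier G \<Longrightarrow> smul {\<one>} F = F"
  unfolding smul_def by (auto simp: subset_iff image_iff)

lemma smul_assoc: "X \<subseteq> carrier G \<Longrightarrow> Y \<subseteq> carrier G \<Longrightarrow> F \<subseteq> carrier G \<Longrightarrow>
    smul (smul X Y) F = smul X (smul Y F)"
proof
  assume c: "X \<subseteq> carrier G" "Y \<subseteq> carrier G" "F \<subseteq> carrier G"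
  show "smul (smul X Y) F \<subseteq> smul X (smul Y F)"
  proof
    fix z assume "z \<in> smul (smul X Y) F"
    then obtain x y f where xyf: "x \<in> X" "y \<in> Y" "f \<in> F" "z = (x \<otimes> y) \<otimes> f"
      unfolding smul_def by auto
    then have "z = x \<otimes> (y \<otimes> f)" using c by (auto simp: m_assoc subset_iff)
    moreover have "(x, y \<otimes> f) \<in> X \<times> smul Y F" using xyf unfolding smul_def by auto
    ultimately show "z \<in> smul X (smul Y F)" unfolding smul_def[of X] by (auto intro!: image_eqI[where x="(x, y \<otimes> f)"])
  qed
  show "smul X (smul Y F) \<subseteq> smul (smul X Y) F"
  proof
    fix z assume "z \<in> smul X (smul Y F)"
    then obtain x y f where xyf: "x \<in> X" "y \<in> Y" "f \<in> F" "z = x \<otimes> (y \<otimes> f)"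
      unfolding smul_def by auto
    then have "z = (x \<otimes> y) \<otimes> f" using c by (auto simp: m_assoc subset_iff)
    moreover have "(x \<otimes> y, f) \<in> smul X Y \<times> F" using xyf unfolding smul_def by auto
    ultimately show "z \<in> smul (smul X Y) F" unfolding smul_def[of "smul X Y"] by (auto intro!: image_eqI[where x="(x \<otimes> y, f)"])
  qed
qed

definition S1 where "S1 = insert \<one> S"

lemma S1_fin: "finite S1" and S1_carr: "S1 \<subseteq> carrier G"
  unfolding S1_def using S_fin S_sub by auto

lemma growth1:
  fixes \<delta> :: real
  assumes nf: "\<forall>F. finite F \<and> F \<subseteq> carrier G \<and> F \<noteq> {} \<longrightarrow> \<delta> * real (card F) < real (card (bd F))"
    and F: "finite F" "F \<subseteq> carrier G"
  shows "(1 + \<delta> / (real (card S) + 1)) * real (card F) \<le> real (card (smul S1 F))"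
proof (cases "F = {}")
  case True then show ?thesis unfolding smul_def by simp
next
  case False
  define D where "D = smul S F - F"
  have finD: "finite D" unfolding D_def using S_fin F smul_fin by blast
  have bdsub: "bd F \<subseteq> (\<Union>s\<in>S. (\<lambda>z. inv s \<otimes> z) ` D)"
  proof
    fix x assume "x \<in> bd F"
    then obtain s where s: "x \<in> F" "s \<in> S" "s \<otimes> x \<notin> F" unfolding bd_def by auto
    have "s \<otimes> x \<in> D" unfolding D_def smul_def using s by force
    moreover have "x = inv s \<otimes> (s \<otimes> x)"
    proof -
      have "x \<in> carrier G" "s \<in> carrier G" using s F S_sub by auto
      then show ?thesis by (simp add: m_assoc[symmetric])
    qed
    ultimately show "x \<in> (\<Union>s\<in>S. (\<lambda>z. inv s \<otimes> z) ` D)" using s by blast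
  qed
  have "card (bd F) \<le> card (\<Union>s\<in>S. (\<lambda>z. inv s \<otimes> z) ` D)"
    by (rule card_mono[OF _ bdsub]) (use S_fin finD in simp)
  also have "\<dots> \<le> (\<Sum>s\<in>S. card ((\<lambda>z. inv s \<otimes> z) ` D))" by (rule card_UN_le[OF S_fin])
  also have "\<dots> \<le> (\<Sum>s\<in>S. card D)" by (rule sum_mono) (rule card_image_le[OF finD])
  also have "\<dots> = card S * card D" by simp
  finally have b1: "real (card (bd F)) \<le> real (card S) * real (card D)" by (simp add: of_nat_mult[symmetric] del: of_nat_mult)
  have "\<delta> * real (card F) < real (card (bd F))" using nf F False by blast
  then have b2: "\<delta> * real (card F) < (real (card S) + 1) * real (card D)"
  proof -
    have "real (card S) * real (card D) \<le> (real (card S) + 1) * real (card D)"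
      by (intro mult_right_mono) auto
    then show ?thesis using b1 \<open>\<delta> * real (card F) < real (card (bd F))\<close> by linarith
  qed
  have "F \<union> D \<subseteq> smul S1 F"
  proof
    fix x assume "x \<in> F \<union> D"
    then show "x \<in> smul S1 F"
    proof
      assume "x \<in> F" then have "x = \<one> \<otimes> x" using F by auto
      then show ?thesis unfolding smul_def S1_def using \<open>x \<in> F\<close> by force
    next
      assume "x \<in> D" then show ?thesis unfolding D_def smul_def S1_def by auto
    qed
  qed
  then have "card (F \<union> D) \<le> card (smul S1 F)" using smul_fin[OF S1_fin F(1)] by (rule card_mono[rotated])
  moreover have "card (F \<union> D) = card F + card D" using F(1) finD by (subst card_Un_disjoint) (auto simp: D_def)
  ultimately have b3: "real (card F) + real (card D) \<le> real (card (smul S1 F))" by linarith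
  have pos: "real (card S) + 1 > 0" by simp
  have "\<delta> / (real (card S) + 1) * real (card F) < real (card D)"
    using b2 pos by (simp add: field_simps)
  then show ?thesis using b3 by (simp add: distrib_right)
qed

primrec Cp where "Cp 0 = {\<one>}" | "Cp (Suc n) = smul S1 (Cp n)"

lemma Cp_fin: "finite (Cp n)" and Cp_carr: "Cp n \<subseteq> carrier G"
  by (induction n) (auto simp: smul_fin S1_fin smul_carr S1_carr)

lemma growthn:
  fixes a :: real
  assumes g1: "\<And>F. finite F \<Longrightarrow> F \<subseteq> carrier G \<Longrightarrow> (1 + a) * real (card F) \<le> real (card (smul S1 F))"
    and a: "a \<ge> 0" and F: "finite F" "F \<subseteq> carrier G"
  shows "(1 + a) ^ n * real (card F) \<le> real (card (smul (Cp n) F))"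
proof (induction n)
  case 0 then show ?case using smul_one F by simp
next
  case (Suc n)
  have fn: "finite (smul (Cp n) F)" "smul (Cp n) F \<subseteq> carrier G"
    using smul_fin Cp_fin F smul_carr Cp_carr by auto
  have "(1 + a) ^ Suc n * real (card F) = (1 + a) * ((1 + a) ^ n * real (card F))" by simp
  also have "\<dots> \<le> (1 + a) * real (card (smul (Cp n) F))" using Suc a by (simp add: mult_left_mono)
  also have "\<dots> \<le> real (card (smul S1 (smul (Cp n) F)))" using g1[OF fn] .
  also have "smul S1 (smul (Cp n) F) = smul (Cp (Suc n)) F"
    using smul_assoc[OF S1_carr Cp_carr F(2)] by simp
  finally show ?case .
qed

lemma nonfolner_double:
  fixes \<delta> :: real
  assumes nf: "\<forall>F. finite F \<and> F \<subseteq> carrier G \<and> F \<noteq> {} \<longrightarrow> \<delta> * real (card F) < real (card (bd F))"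
    and d: "\<delta> > 0"
  shows "\<exists>C. finite C \<and> C \<subseteq> carrier G \<and> C \<noteq> {} \<and>
     (\<forall>F. finite F \<and> F \<subseteq> carrier G \<longrightarrow> 2 * card F \<le> card (smul C F))"
proof -
  define a where "a = \<delta> / (real (card S) + 1)"
  have a: "a > 0" unfolding a_def using d by simp
  define n where "n = nat \<lceil>1 / a\<rceil>"
  have "1 + real n * a \<ge> 2"
  proof -
    have "real n \<ge> 1 / a" unfolding n_def by (simp add: real_nat_ceiling_ge)
    then have "real n * a \<ge> 1" using a by (simp add: field_simps)
    then show ?thesis by simp
  qed
  moreover have "1 + real n * a \<le> (1 + a) ^ n" by (rule Bernoulli_inequality) (use a in simp)
  ultimately have two: "(1 + a) ^ n \<ge> 2" by simp
  have "\<forall>F. finite F \<and> F \<subseteq> carrier G \<longrightarrow> 2 * card F \<le> card (smul (Cp n) F)"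
  proof (intro allI impI)
    fix F assume F: "finite F \<and> F \<subseteq> carrier G"
    have g1: "(1 + a) * real (card F') \<le> real (card (smul S1 F'))" if "finite F'" "F' \<subseteq> carrier G" for F'
      unfolding a_def by (rule growth1[OF nf that])
    have "(1 + a) ^ n * real (card F) \<le> real (card (smul (Cp n) F))"
      using growthn[OF g1 _ conjunct1[OF F] conjunct2[OF F]] a by simp
    moreover have "2 * real (card F) \<le> (1 + a) ^ n * real (card F)" by (rule mult_right_mono[OF two]) simp
    ultimately have "real (2 * card F) \<le> real (card (smul (Cp n) F))" by simp
    then show "2 * card F \<le> card (smul (Cp n) F)" by (simp only: of_nat_le_iff)
  qed
  moreover have "\<one> \<in> Cp m" for m
  proof (induction m)
    case 0 then show ?case by simp
  next
    case (Suc m)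
    have e: "\<one> = (\<lambda>(x,f). x \<otimes> f) (\<one>, \<one>)" by simp
    have "(\<one>, \<one>) \<in> S1 \<times> Cp m" using Suc unfolding S1_def by simp
    then show ?case unfolding Cp.simps smul_def by (rule image_eqI[where f="\<lambda>(x,f). x \<otimes> f", OF e])
  qed
  then have "Cp n \<noteq> {}" by blast
  ultimately have "finite (Cp n) \<and> Cp n \<subseteq> carrier G \<and> Cp n \<noteq> {} \<and>
     (\<forall>F. finite F \<and> F \<subseteq> carrier G \<longrightarrow> 2 * card F \<le> card (smul (Cp n) F))"
    using Cp_fin Cp_carr by simp
  then show ?thesis by (rule exI)
qed

end

definition dfam where "dfam X I \<longleftrightarrow> (\<forall>j\<in>I. \<forall>k\<in>I. j \<noteq> k \<longrightarrow> X j \<inter> X k = {})"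

context cay begin

lemma fin_match:
  assumes C: "finite C" "C \<subseteq> carrier G"
    and dbl: "\<forall>F. finite F \<and> F \<subseteq> carrier G \<longrightarrow> 2 * card F \<le> card (smul C F)"
    and F: "finite F" "F \<subseteq> carrier G"
  shows "\<exists>cf. (\<forall>p\<in>F \<times> (UNIV::bool set). cf p \<in> C) \<and> inj_on (\<lambda>p. cf p \<otimes> fst p) (F \<times> (UNIV::bool set))"
proof -
  define I where "I = F \<times> (UNIV::bool set)"
  define A where "A = (\<lambda>p::'a \<times> bool. (\<lambda>c. c \<otimes> fst p) ` C)"
  have finI: "finite I" unfolding I_def using F by simp
  have Afin: "\<forall>i\<in>I. finite (A i)" unfolding A_def using C by simp
  have hall: "\<forall>J\<subseteq>I. card J \<le> card (\<Union>(A ` J))"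
  proof (intro allI impI)
    fix J assume J: "J \<subseteq> I"
    have finJ: "finite J" using J finI finite_subset by blast
    have fJ: "finite (fst ` J)" "fst ` J \<subseteq> carrier G" using finJ J F unfolding I_def by auto
    have u: "\<Union>(A ` J) = smul C (fst ` J)"
      unfolding A_def smul_def by (auto simp: image_iff)
    have "J \<subseteq> fst ` J \<times> (UNIV::bool set)" using J unfolding I_def by force
    then have "card J \<le> card (fst ` J \<times> (UNIV::bool set))"
      using fJ(1) by (intro card_mono) auto
    also have "\<dots> = 2 * card (fst ` J)" by (simp add: card_cartesian_product)
    also have "\<dots> \<le> card (smul C (fst ` J))" using dbl fJ by blast
    finally show "card J \<le> card (\<Union>(A ` J))" unfolding u .
  qed
  obtain f where f: "\<forall>i\<in>I. f i \<in> A i" "inj_on f I" using hall_finite[OF finI Afin hall] by blast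
  define cf where "cf = (\<lambda>p. SOME c. c \<in> C \<and> f p = c \<otimes> fst p)"
  have cf: "cf p \<in> C \<and> f p = cf p \<otimes> fst p" if "p \<in> I" for p
  proof -
    have "\<exists>c. c \<in> C \<and> f p = c \<otimes> fst p" using f(1) that unfolding A_def by auto
    then show ?thesis unfolding cf_def by (rule someI_ex)
  qed
  have "inj_on (\<lambda>p. cf p \<otimes> fst p) I"
  proof (rule inj_onI)
    fix p q assume pq: "p \<in> I" "q \<in> I" "cf p \<otimes> fst p = cf q \<otimes> fst q"
    then have "f p = f q" using cf[OF pq(1)] cf[OF pq(2)] by simp
    then show "p = q" using inj_onD[OF f(2) _ pq(1,2)] by simp
  qed
  moreover have "\<forall>p\<in>I. cf p \<in> C" using cf by blast
  ultimately show ?thesis unfolding I_def by (intro exI[of _ cf]) simp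
qed

lemma mu_props:
  assumes am: "amenable G"
  obtains \<mu> :: "'a set \<Rightarrow> real" where "\<mu> (carrier G) = 1"
     "\<And>A. A \<subseteq> carrier G \<Longrightarrow> 0 \<le> \<mu> A"
     "\<And>A B. A \<subseteq> carrier G \<Longrightarrow> B \<subseteq> carrier G \<Longrightarrow> A \<inter> B = {} \<Longrightarrow> \<mu> (A \<union> B) = \<mu> A + \<mu> B"
     "\<And>g A. g \<in> carrier G \<Longrightarrow> A \<subseteq> carrier G \<Longrightarrow> \<mu> (g <# A) = \<mu> A"
proof -
  obtain \<mu> :: "'a set \<Rightarrow> real" where m: "\<mu> (carrier G) = 1 \<and>
     (\<forall>A. A \<subseteq> carrier G \<longrightarrow> 0 \<le> \<mu> A) \<and>
     (\<forall>A B. A \<subseteq> carrier G \<and> B \<subseteq> carrier G \<and> A \<inter> B = {} \<longrightarrow> \<mu> (A \<union> B) = \<mu> A + \<mu> B) \<and>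
     (\<forall>g\<in>carrier G. \<forall>A. A \<subseteq> carrier G \<longrightarrow> \<mu> (g <# A) = \<mu> A)"
    using am[unfolded amenable_def] by (rule exE)
  show ?thesis by (rule that[of \<mu>]) (use m in auto)
qed

lemma mu_sum:
  fixes \<mu> :: "'a set \<Rightarrow> real"
  assumes add: "\<And>A B. A \<subseteq> carrier G \<Longrightarrow> B \<subseteq> carrier G \<Longrightarrow> A \<inter> B = {} \<Longrightarrow> \<mu> (A \<union> B) = \<mu> A + \<mu> B"
  shows "finite I \<Longrightarrow> dfam X I \<Longrightarrow> (\<forall>j\<in>I. X j \<subseteq> carrier G) \<Longrightarrow>
    \<mu> (\<Union>j\<in>I. X j) = (\<Sum>j\<in>I. \<mu> (X j))"
proof (induction I rule: finite_induct)
  case empty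
  have "\<mu> ({} \<union> {}) = \<mu> {} + \<mu> {}" by (rule add) auto
  then show ?case by simp
next
  case (insert j I)
  have d: "dfam X I" using insert.prems(1) unfolding dfam_def by blast
  have "(\<Union>k\<in>insert j I. X k) = X j \<union> (\<Union>k\<in>I. X k)" by simp
  moreover have "X j \<inter> (\<Union>k\<in>I. X k) = {}"
    using insert.prems(1) insert.hyps(2) unfolding dfam_def by fastforce
  ultimately have "\<mu> (\<Union>k\<in>insert j I. X k) = \<mu> (X j) + \<mu> (\<Union>k\<in>I. X k)"
  proof -
    have "X j \<subseteq> carrier G" "(\<Union>k\<in>I. X k) \<subseteq> carrier G" using insert.prems(2) by auto
    then show ?thesis using add \<open>X j \<inter> (\<Union>k\<in>I. X k) = {}\<close> by simp
  qed
  then show ?case using insert d by simp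
qed

lemma paradox_false:
  assumes am: "amenable G" and C: "finite C" "C \<subseteq> carrier G"
    and phi: "\<forall>p\<in>carrier G \<times> (UNIV::bool set). \<phi> p \<in> C"
    and inj: "inj_on (\<lambda>p. \<phi> p \<otimes> fst p) (carrier G \<times> (UNIV::bool set))"
  shows False
proof -
  obtain \<mu> :: "'a set \<Rightarrow> real" where mu: "\<mu> (carrier G) = 1"
     "\<And>A. A \<subseteq> carrier G \<Longrightarrow> 0 \<le> \<mu> A"
     "\<And>A B. A \<subseteq> carrier G \<Longrightarrow> B \<subseteq> carrier G \<Longrightarrow> A \<inter> B = {} \<Longrightarrow> \<mu> (A \<union> B) = \<mu> A + \<mu> B"
     "\<And>g A. g \<in> carrier G \<Longrightarrow> A \<subseteq> carrier G \<Longrightarrow> \<mu> (g <# A) = \<mu> A"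
    using mu_props[OF am] by blast
  define m where "m = (\<lambda>p. \<phi> p \<otimes> fst p)"
  define Ai where "Ai = (\<lambda>i. m ` (carrier G \<times> {i}))"
  have Ai1: "\<mu> (Ai i) = 1" for i
  proof -
    define Y where "Y = (\<lambda>c. {y\<in>carrier G. \<phi> (y, i) = c})"
    have Yc: "\<forall>c\<in>C. Y c \<subseteq> carrier G" unfolding Y_def by auto
    have e1: "Ai i = (\<Union>c\<in>C. c <# Y c)"
    proof
      show "Ai i \<subseteq> (\<Union>c\<in>C. c <# Y c)"
      proof
        fix z assume "z \<in> Ai i"
        then obtain y where y: "y \<in> carrier G" "z = \<phi> (y, i) \<otimes> y" unfolding Ai_def m_def by auto
        then have "\<phi> (y, i) \<in> C" using phi by auto
        moreover have "z \<in> \<phi> (y, i) <# Y (\<phi> (y, i))" unfolding l_coset_def Y_def using y by auto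
        ultimately show "z \<in> (\<Union>c\<in>C. c <# Y c)" by blast
      qed
      show "(\<Union>c\<in>C. c <# Y c) \<subseteq> Ai i"
      proof
        fix z assume "z \<in> (\<Union>c\<in>C. c <# Y c)"
        then obtain c y where "c \<in> C" "y \<in> Y c" "z = c \<otimes> y" unfolding l_coset_def by auto
        then have "y \<in> carrier G" "z = m (y, i)" unfolding Y_def m_def by auto
        then show "z \<in> Ai i" unfolding Ai_def by auto
      qed
    qed
    have d1: "dfam (\<lambda>c. c <# Y c) C"
    proof (unfold dfam_def, intro ballI impI)
      fix c c' assume cc: "c \<in> C" "c' \<in> C" "c \<noteq> c'"
      show "(c <# Y c) \<inter> (c' <# Y c') = {}"
      proof (rule ccontr)
        assume "(c <# Y c) \<inter> (c' <# Y c') \<noteq> {}"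
        then obtain y y' where yy: "y \<in> Y c" "y' \<in> Y c'" "c \<otimes> y = c' \<otimes> y'" unfolding l_coset_def by auto
        then have "m (y, i) = m (y', i)" "(y, i) \<in> carrier G \<times> UNIV" "(y', i) \<in> carrier G \<times> UNIV"
          unfolding m_def Y_def by auto
        then have "y = y'" using inj unfolding m_def inj_on_def by blast
        then show False using yy cc unfolding Y_def by auto
      qed
    qed
    have d2: "dfam Y C" unfolding dfam_def Y_def by auto
    have e2: "(\<Union>c\<in>C. Y c) = carrier G" unfolding Y_def using phi by auto
    have lc: "\<forall>c\<in>C. c <# Y c \<subseteq> carrier G"
    proof
      fix c assume "c \<in> C"
      then have cc: "c \<in> carrier G" "Y c \<subseteq> carrier G" using Yc C(2) by auto
      show "c <# Y c \<subseteq> carrier G"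
      proof
        fix z assume "z \<in> c <# Y c"
        then obtain h where "h \<in> Y c" "z = c \<otimes> h" unfolding l_coset_def by auto
        then show "z \<in> carrier G" using cc by auto
      qed
    qed
    have "\<mu> (Ai i) = (\<Sum>c\<in>C. \<mu> (c <# Y c))"
      unfolding e1 by (rule mu_sum[of \<mu> C "\<lambda>c. c <# Y c", OF mu(3) C(1) d1 lc])
    also have "\<dots> = (\<Sum>c\<in>C. \<mu> (Y c))" 
    proof (rule sum.cong[OF refl])
      fix c assume "c \<in> C"
      then have "c \<in> carrier G" "Y c \<subseteq> carrier G" using Yc C(2) by auto
      then show "\<mu> (c <# Y c) = \<mu> (Y c)" by (rule mu(4))
    qed
    also have "\<dots> = \<mu> (\<Union>c\<in>C. Y c)" by (rule mu_sum[of \<mu> C Y, OF mu(3) C(1) d2 Yc, symmetric])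
    finally show ?thesis unfolding e2 mu(1) .
  qed
  have Aic: "Ai i \<subseteq> carrier G" for i
  proof
    fix z assume "z \<in> Ai i"
    then obtain y where y: "y \<in> carrier G" "z = \<phi> (y, i) \<otimes> y" unfolding Ai_def m_def by auto
    moreover have "\<phi> (y, i) \<in> carrier G" using phi C(2) y(1) by auto
    ultimately show "z \<in> carrier G" by simp
  qed
  have "Ai True \<inter> Ai False = {}"
  proof (rule ccontr)
    assume "Ai True \<inter> Ai False \<noteq> {}"
    then obtain a b where ab: "a \<in> carrier G" "b \<in> carrier G" "m (a, True) = m (b, False)"
      unfolding Ai_def by auto
    then have "(a, True) = (b, False)" using inj unfolding m_def inj_on_def by blast
    then show False by simp
  qed
  then have "\<mu> (Ai True \<union> Ai False) = 2" using mu(3)[OF Aic Aic] Ai1 by simp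
  moreover have "\<mu> (carrier G) = \<mu> (Ai True \<union> Ai False) + \<mu> (carrier G - (Ai True \<union> Ai False))"
  proof -
    have u: "(Ai True \<union> Ai False) \<union> (carrier G - (Ai True \<union> Ai False)) = carrier G" using Aic by auto
    have "\<mu> ((Ai True \<union> Ai False) \<union> (carrier G - (Ai True \<union> Ai False))) =
       \<mu> (Ai True \<union> Ai False) + \<mu> (carrier G - (Ai True \<union> Ai False))"
      by (rule mu(3)) (use Aic in auto)
    then show ?thesis unfolding u .
  qed
  moreover have "\<mu> (carrier G - (Ai True \<union> Ai False)) \<ge> 0" by (rule mu(2)) auto
  ultimately show False using mu(1) by linarith
qed

end

context cay begin

lemma countable_carrier: "countable (carrier G)"
proof -
  have "carrier G \<subseteq> (\<Union>k. {g. (E ^^ k) \<one> g})"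
  proof
    fix g assume "g \<in> carrier G"
    then obtain k where "(E ^^ k) g \<one>" using conn_one by blast
    then have "(E ^^ k) \<one> g" by (rule Epow_sym)
    then show "g \<in> (\<Union>k. {g. (E ^^ k) \<one> g})" by blast
  qed
  moreover have "countable (\<Union>k. {g. (E ^^ k) \<one> g})"
    by (rule countable_UN) (use sphere_fin in \<open>auto intro: countable_finite\<close>)
  ultimately show ?thesis by (rule countable_subset)
qed

lemma ball_carr: "ball \<one> n \<subseteq> carrier G"
  unfolding ball_def using Epow_carr by blast

lemma ball_mono: "n \<le> n' \<Longrightarrow> ball a n \<subseteq> ball a n'"
  unfolding ball_def using le_trans by blast

lemma in_ball: "y \<in> carrier G \<Longrightarrow> \<exists>n. y \<in> ball \<one> n"
proof -
  assume "y \<in> carrier G"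
  then obtain k where "(E ^^ k) y \<one>" using conn_one by blast
  then have "(E ^^ k) \<one> y" by (rule Epow_sym)
  then show ?thesis unfolding ball_def by blast
qed

lemma compact_match:
  assumes C: "finite C" "C \<subseteq> carrier G" "C \<noteq> {}"
    and dbl: "\<forall>F. finite F \<and> F \<subseteq> carrier G \<longrightarrow> 2 * card F \<le> card (smul C F)"
  shows "\<exists>\<phi>. (\<forall>p\<in>carrier G \<times> (UNIV::bool set). \<phi> p \<in> C) \<and>
     inj_on (\<lambda>p. \<phi> p \<otimes> fst p) (carrier G \<times> (UNIV::bool set))"
proof -
  define B where "B = (\<lambda>n. ball \<one> n)"
  have Bfin: "finite (B n)" for n unfolding B_def using ball_fin by blast
  have Bc: "B n \<subseteq> carrier G" for n unfolding B_def by (rule ball_carr)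
  define Q where "Q = (\<lambda>n cf. (\<forall>p\<in>B n \<times> (UNIV::bool set). cf p \<in> C) \<and>
      inj_on (\<lambda>p. cf p \<otimes> fst p) (B n \<times> (UNIV::bool set)))"
  define cfs where "cfs = (\<lambda>n. SOME cf. Q n cf)"
  have Qc: "Q n (cfs n)" for n
  proof -
    have "\<exists>cf. Q n cf" unfolding Q_def by (rule fin_match[OF C(1,2) dbl Bfin Bc])
    then show ?thesis unfolding cfs_def by (rule someI_ex)
  qed
  obtain c0 where c0: "c0 \<in> C" using C(3) by blast
  define cf where "cf = (\<lambda>n p. if p \<in> B n \<times> (UNIV::bool set) then cfs n p else c0)"
  have cfC: "cf n p \<in> C" for n p using Qc[of n] c0 unfolding cf_def Q_def by auto
  define X where "X = carrier G \<times> (UNIV::bool set)"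
  have Xne: "X \<noteq> {}" unfolding X_def by auto
  have Xc: "countable X" unfolding X_def using countable_carrier by simp
  define e where "e = from_nat_into X"
  have eX: "\<exists>k. e k = p" if "p \<in> X" for p
    using that range_from_nat_into[OF Xne Xc] unfolding e_def by (metis rangeE)
  define P where "P = (\<lambda>k (s::nat\<Rightarrow>nat). \<forall>n. cf (s n) (e k) = cf (s 0) (e k))"
  interpret ss: subseqs P
  proof
    fix k and s :: "nat \<Rightarrow> nat" assume "strict_mono s"
    define h where "h = (\<lambda>n. cf (s n) (e k))"
    have "finite (h ` UNIV)" using cfC C(1) unfolding h_def by (metis finite_subset image_subset_iff)
    then obtain v where "infinite (h -` {v})" using inf_img_fin_dom[of h UNIV] by auto
    then obtain r :: "nat \<Rightarrow> nat" where r: "strict_mono r" "\<forall>n. r n \<in> h -` {v}"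
      using infinite_enumerate by blast
    have "P k (s \<circ> r)" unfolding P_def using r(2) unfolding h_def by simp
    then show "\<exists>r'. strict_mono r' \<and> P k (s \<circ> r')" using r(1) by blast
  qed
  have stab: "P n (s \<circ> r)" if "strict_mono r" "P n s" for r s n
    using that(2) unfolding P_def by (metis comp_apply)
  have dh: "P k (ss.diagseq \<circ> ((+) (Suc k)))" for k
    by (rule ss.diagseq_holds) (rule stab)
  define kof where "kof = (\<lambda>p. SOME k. e k = p)"
  have kof: "e (kof p) = p" if "p \<in> X" for p
    using eX[OF that] unfolding kof_def by (rule someI_ex)
  define \<phi> where "\<phi> = (\<lambda>p. cf (ss.diagseq (Suc (kof p))) p)"
  have lim: "cf (ss.diagseq N) p = \<phi> p" if "p \<in> X" "N \<ge> Suc (kof p)" for p N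
  proof -
    have "cf (ss.diagseq (Suc (kof p) + (N - Suc (kof p)))) (e (kof p))
        = cf (ss.diagseq (Suc (kof p) + 0)) (e (kof p))"
      using dh[of "kof p"] unfolding P_def by simp
    then show ?thesis using that kof[OF that(1)] unfolding \<phi>_def by simp
  qed
  have "inj_on (\<lambda>p. \<phi> p \<otimes> fst p) X"
  proof (rule inj_onI)
    fix p q assume pq: "p \<in> X" "q \<in> X" "\<phi> p \<otimes> fst p = \<phi> q \<otimes> fst q"
    have "fst p \<in> carrier G" "fst q \<in> carrier G" using pq(1,2) unfolding X_def by auto
    then obtain rp rq where rp: "fst p \<in> B rp" and rq: "fst q \<in> B rq" using in_ball unfolding B_def by blast
    define N where "N = max (max (Suc (kof p)) (Suc (kof q))) (max rp rq)"
    define n where "n = ss.diagseq N"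
    have "N \<le> n" unfolding n_def using seq_suble[OF ss.subseq_diagseq] by blast
    then have pn: "p \<in> B n \<times> (UNIV::bool set)" "q \<in> B n \<times> (UNIV::bool set)"
      using rp rq ball_mono unfolding N_def B_def by (auto simp: mem_Times_iff)
    have "cf n p = \<phi> p" "cf n q = \<phi> q" unfolding n_def using lim pq N_def by auto
    then have "cfs n p \<otimes> fst p = cfs n q \<otimes> fst q" using pn pq(3) unfolding cf_def by simp
    then show "p = q" using Qc[of n] pn unfolding Q_def inj_on_def by blast
  qed
  moreover have "\<forall>p\<in>X. \<phi> p \<in> C" unfolding \<phi>_def using cfC by blast
  ultimately show ?thesis unfolding X_def by blast
qed

end

lemma gdist_le: "(R ^^ n) x y \<Longrightarrow> gdist R x y \<le> n"
  unfolding gdist_def by (rule Least_le)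

lemma gdist_path: "\<exists>n. (R ^^ n) x y \<Longrightarrow> (R ^^ gdist R x y) x y"
  unfolding gdist_def by (rule LeastI_ex)

lemma sum_UN_le_nonneg:
  fixes w :: "'a \<Rightarrow> real"
  assumes "finite I" "\<forall>i\<in>I. finite (A i)" "\<forall>x\<in>\<Union>(A ` I). 0 \<le> w x"
  shows "sum w (\<Union>(A ` I)) \<le> (\<Sum>i\<in>I. sum w (A i))"
  using assms
proof (induction I rule: finite_induct)
  case empty then show ?case by simp
next
  case (insert i I)
  have f1: "finite (A i)" "finite (\<Union>(A ` I))" using insert by auto
  have "sum w (A i \<union> \<Union>(A ` I)) = sum w (A i) + sum w (\<Union>(A ` I)) - sum w (A i \<inter> \<Union>(A ` I))"
    using sum_Un[OF f1] by simp
  moreover have "sum w (A i \<inter> \<Union>(A ` I)) \<ge> 0" using insert.prems(2) by (intro sum_nonneg) auto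
  moreover have "sum w (\<Union>(A ` I)) \<le> (\<Sum>i\<in>I. sum w (A i))" using insert by auto
  ultimately show ?case using insert.hyps by simp
qed

context cay begin

lemma compare:
  assumes S0: "fin_sym_gen_set G S0"
  shows "\<exists>l::nat. l \<ge> 1 \<and> (\<forall>n x y. (E ^^ n) x y \<longrightarrow> (\<exists>k\<le>l * n. (cayley_adj G S0 ^^ k) x y))"
proof -
  interpret c0: cay G S0 by unfold_locales (rule S0)
  define ks where "ks = (\<lambda>s. LEAST k. (c0.E ^^ k) s \<one>)"
  have ks: "(c0.E ^^ ks s) s \<one>" if "s \<in> S" for s
  proof -
    have "s \<in> carrier G" using that S_sub by auto
    then have "\<exists>k. (c0.E ^^ k) s \<one>" by (rule c0.conn_one)
    then show ?thesis unfolding ks_def by (rule LeastI_ex)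
  qed
  define l where "l = Max (insert 1 (ks ` S))"
  have l1: "l \<ge> 1" unfolding l_def using S_fin by simp
  have lks: "ks s \<le> l" if "s \<in> S" for s unfolding l_def using S_fin that by simp
  have edge: "\<exists>k\<le>l. (c0.E ^^ k) x y" if xy: "E x y" for x y
  proof -
    obtain s where s: "s \<in> S" "x = s \<otimes> y" "y \<in> carrier G" using xy unfolding cayley_adj_def by auto
    have "(c0.E ^^ ks s) (s \<otimes> y) (\<one> \<otimes> y)" using c0.Epow_right[OF ks[OF s(1)] s(3)] .
    then have "(c0.E ^^ ks s) x y" using s by simp
    then show ?thesis using lks[OF s(1)] by blast
  qed
  have "\<forall>x y. (E ^^ n) x y \<longrightarrow> (\<exists>k\<le>l * n. (c0.E ^^ k) x y)" for n
  proof (induction n)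
    case 0 then show ?case by (auto intro: exI[of _ 0])
  next
    case (Suc n)
    show ?case
    proof (intro allI impI)
      fix x z assume "(E ^^ Suc n) x z"
      then obtain y where y: "(E ^^ n) x y" "E y z" by (auto elim: relpowp_Suc_E)
      obtain k1 where k1: "k1 \<le> l * n" "(c0.E ^^ k1) x y" using Suc y(1) by blast
      obtain k2 where k2: "k2 \<le> l" "(c0.E ^^ k2) y z" using edge[OF y(2)] by blast
      have "(c0.E ^^ (k1 + k2)) x z" using relpowp_trans[OF k1(2) k2(2)] .
      moreover have "k1 + k2 \<le> l * Suc n" using k1 k2 by simp
      ultimately show "\<exists>k\<le>l * Suc n. (c0.E ^^ k) x z" by blast
    qed
  qed
  then show ?thesis using l1 by blast
qed

end

context cay begin

lemma asdim_whf:
  assumes S0: "fin_sym_gen_set G S0" and ad: "asdim_le (carrier G) (cayley_adj G S0) d"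
  shows "weighted_hyperfinite (carrier G) E"
proof -
  interpret c0: cay G S0 by unfold_locales (rule S0)
  obtain l :: nat where l: "l \<ge> 1" "\<forall>n x y. (E ^^ n) x y \<longrightarrow> (\<exists>k\<le>l * n. (c0.E ^^ k) x y)"
    using compare[OF S0] by blast
  obtain l' :: nat where l': "l' \<ge> 1" "\<forall>n x y. (c0.E ^^ n) x y \<longrightarrow> (\<exists>k\<le>l' * n. (E ^^ k) x y)"
    using c0.compare[OF fsg] by blast
  show ?thesis unfolding weighted_hyperfinite_def
  proof (intro allI impI)
    fix \<epsilon> :: real assume eps: "\<epsilon> > 0"
    define m :: nat where "m = nat \<lceil>real d / \<epsilon>\<rceil> + 1"
    have m1: "m \<ge> 1" unfolding m_def by simp
    have dm: "real d \<le> \<epsilon> * real m"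
    proof -
      have "real d / \<epsilon> \<le> real m" unfolding m_def by linarith
      then show ?thesis using eps by (simp add: field_simps)
    qed
    define r :: nat where "r = l * (2 * m) + 1"
    have r0: "r > 0" unfolding r_def by simp
    obtain R :: nat and U :: "nat \<Rightarrow> 'a set" where
      UA: "(\<Union>i<d. U i) = carrier G \<and>
       (\<forall>i<d. \<forall>j<d. i \<noteq> j \<longrightarrow> U i \<inter> U j = {}) \<and>
       (\<forall>i<d. (\<forall>C \<in> components c0.E (U i). \<forall>x\<in>C. \<forall>y\<in>C. gdist c0.E x y \<le> R) \<and>
              (\<forall>C1 \<in> components c0.E (U i). \<forall>C2 \<in> components c0.E (U i). C1 \<noteq> C2 \<longrightarrow>
                  (\<forall>x\<in>C1. \<forall>y\<in>C2. r \<le> gdist c0.E x y)))"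
      using ad[unfolded asdim_le_def, rule_format, OF r0] by (elim exE) (rule that)
    have Ucov: "(\<Union>i<d. U i) = carrier G" using UA by (rule conjunct1)
    have Udiam: "\<forall>i<d. \<forall>C \<in> components c0.E (U i). \<forall>x\<in>C. \<forall>y\<in>C. gdist c0.E x y \<le> R"
      using UA by simp
    have Usep: "\<forall>i<d. \<forall>C1 \<in> components c0.E (U i). \<forall>C2 \<in> components c0.E (U i). C1 \<noteq> C2 \<longrightarrow>
                  (\<forall>x\<in>C1. \<forall>y\<in>C2. r \<le> gdist c0.E x y)"
      using UA by simp
    define K where "K = (\<Sum>j\<le>l' * R + m. card S ^ j)"
    have Kpos: "K > 0"
    proof -
      have "card S ^ 0 \<le> K" unfolding K_def by (rule member_le_sum) auto
      then show ?thesis by simp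
    qed
    show "\<exists>K>0. \<forall>L. finite L \<and> L \<subseteq> carrier G \<longrightarrow> (\<forall>w. (\<forall>x\<in>L. 0 \<le> w x) \<longrightarrow>
        (\<exists>M\<subseteq>L. sum w M \<le> \<epsilon> * sum w L \<and> (\<forall>C\<in>components E (L - M). card C \<le> K)))"
    proof (intro exI[of _ K] conjI Kpos allI impI)
      fix L and w :: "'a \<Rightarrow> real"
      assume L: "finite L \<and> L \<subseteq> carrier G" and wnn: "\<forall>x\<in>L. 0 \<le> w x"
      define W where "W = sum w L"
      have W0: "W \<ge> 0" unfolding W_def using wnn by (intro sum_nonneg) blast
      define Dist where "Dist = (\<lambda>i x. LEAST n. \<exists>u\<in>U i. (E ^^ n) x u)"
      define Sp where "Sp = (\<lambda>i k. {x\<in>L. Dist i x = k})"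
      have choose: "\<exists>k. 1 \<le> k \<and> k \<le> m \<and> sum w (Sp i k) \<le> W / real m" for i
      proof (rule ccontr)
        assume "\<not> ?thesis"
        then have gt: "\<And>k. k \<in> {1..m} \<Longrightarrow> W / real m < sum w (Sp i k)" by force
        have fin: "\<forall>k\<in>{1..m}. finite (Sp i k)" unfolding Sp_def using L by auto
        have disj: "\<forall>k\<in>{1..m}. \<forall>k'\<in>{1..m}. k \<noteq> k' \<longrightarrow> Sp i k \<inter> Sp i k' = {}" unfolding Sp_def by auto
        have "(\<Sum>k\<in>{1..m}. W / real m) < (\<Sum>k\<in>{1..m}. sum w (Sp i k))"
          by (rule sum_strict_mono) (use m1 gt in auto)
        also have "\<dots> = sum w (\<Union>k\<in>{1..m}. Sp i k)"
          by (rule sum.UNION_disjoint[OF _ fin disj, symmetric]) simp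
        also have "\<dots> \<le> sum w L"
          by (rule sum_mono2) (use L wnn in \<open>auto simp: Sp_def\<close>)
        finally have "real m * (W / real m) < W" unfolding W_def by simp
        then show False using m1 by simp
      qed
      obtain kk where kk: "\<And>i. 1 \<le> kk i \<and> kk i \<le> m \<and> sum w (Sp i (kk i)) \<le> W / real m"
        using choose by metis
      define M where "M = (\<Union>i\<in>{..<d}. Sp i (kk i))"
      have MsubL2: "M \<subseteq> L" unfolding M_def Sp_def by auto
      have wM: "sum w M \<le> \<epsilon> * sum w L"
      proof -
        have "sum w M \<le> (\<Sum>i\<in>{..<d}. sum w (Sp i (kk i)))"
          unfolding M_def by (rule sum_UN_le_nonneg) (use L wnn in \<open>auto simp: Sp_def\<close>)
        also have "\<dots> \<le> (\<Sum>i\<in>{..<d}. W / real m)" by (rule sum_mono) (use kk in auto)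
        also have "\<dots> = real d * (W / real m)" by simp
        also have "\<dots> \<le> \<epsilon> * W"
        proof -
          have e: "real d * (W / real m) = (real d / real m) * W" by simp
          have "real d / real m \<le> \<epsilon>" using dm m1 by (simp add: field_simps)
          then have "(real d / real m) * W \<le> \<epsilon> * W" by (rule mult_right_mono[OF _ W0])
          then show ?thesis unfolding e .
        qed
        finally show ?thesis unfolding W_def .
      qed
      have comps: "\<forall>C\<in>components E (L - M). card C \<le> K"
      proof
        fix C assume "C \<in> components E (L - M)"
        then obtain x0 where x0: "x0 \<in> L - M" "C = {y. y \<in> L - M \<and> reach_in E (L - M) x0 y}"
          unfolding components_def by auto
        have x0c: "x0 \<in> carrier G" using x0 L by auto
        then obtain j where j: "j < d" "x0 \<in> U j" using Ucov by auto
        define C0 where "C0 = {y. y \<in> U j \<and> reach_in c0.E (U j) x0 y}"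
        have C0c: "C0 \<in> components c0.E (U j)" unfolding C0_def components_def using j by blast
        have x0C0: "x0 \<in> C0" unfolding C0_def reach_in_def using j by simp
        have Ujc: "U j \<subseteq> carrier G" using Ucov j by auto
        have inv: "\<exists>n<kk j. \<exists>u\<in>C0. (E ^^ n) y u" if "reach_in E (L - M) x0 y" for y
          using that unfolding reach_in_def
        proof (induction rule: rtranclp_induct)
          case base
          have "(E ^^ 0) x0 x0" by simp
          moreover have "0 < kk j" using kk[of j] by simp
          ultimately show ?case using x0C0 by blast
        next
          case (step y z)
          obtain n u where nu: "n < kk j" "u \<in> C0" "(E ^^ n) y u" using step.IH by blast
          have yz: "y \<in> L - M" "z \<in> L - M" "E y z" using step.hyps(2) by auto
          have "(E ^^ Suc n) z u" using E_sym[OF yz(3)] nu(3) by (rule relpowp_Suc_I2)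
          moreover have uU: "u \<in> U j" using nu(2) unfolding C0_def by auto
          ultimately have ex: "\<exists>n'. \<exists>u\<in>U j. (E ^^ n') z u" by blast
          have Dle: "Dist j z \<le> Suc n" unfolding Dist_def
            by (rule Least_le) (use uU \<open>(E ^^ Suc n) z u\<close> in blast)
          obtain u' where u': "u' \<in> U j" "(E ^^ Dist j z) z u'"
            using LeastI_ex[OF ex] unfolding Dist_def by blast
          have "Dist j z \<noteq> kk j"
          proof
            assume "Dist j z = kk j"
            then have "z \<in> M" unfolding M_def Sp_def using yz(2) j(1) by auto
            then show False using yz(2) by auto
          qed
          then have Dlt: "Dist j z < kk j" using Dle nu(1) by linarith
          define C' where "C' = {y. y \<in> U j \<and> reach_in c0.E (U j) u' y}"
          have C'c: "C' \<in> components c0.E (U j)" unfolding C'_def components_def using u' by blast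
          have u'C': "u' \<in> C'" unfolding C'_def reach_in_def using u' by simp
          have "(E ^^ Suc n) u z" using Epow_sym \<open>(E ^^ Suc n) z u\<close> by blast
          then have "(E ^^ (Suc n + Dist j z)) u u'" using u'(2) by (rule relpowp_trans)
          then obtain k where k: "k \<le> l * (Suc n + Dist j z)" "(c0.E ^^ k) u u'" using l(2) by blast
          have "Suc n + Dist j z < 2 * m" using nu(1) Dlt kk[of j] by linarith
          then have "l * (Suc n + Dist j z) \<le> l * (2 * m)" by (intro mult_le_mono2) simp
          then have "gdist c0.E u u' < r" using gdist_le[OF k(2)] k(1) unfolding r_def by linarith
          then have "C0 = C'" using Usep j(1) C0c C'c nu(2) u'C' by (meson not_le)
          then have "u' \<in> C0" using u'C' by simp
          then show ?case using Dlt u'(2) by blast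
        qed
        have "C \<subseteq> ball x0 (l' * R + m)"
        proof
          fix y assume "y \<in> C"
          then have "reach_in E (L - M) x0 y" using x0 by auto
          then obtain n u where nu: "n < kk j" "u \<in> C0" "(E ^^ n) y u" using inv by blast
          have uc: "u \<in> carrier G" using nu(2) Ujc unfolding C0_def by auto
          have gR: "gdist c0.E x0 u \<le> R" using Udiam j(1) C0c x0C0 nu(2) by blast
          have "\<exists>k. (c0.E ^^ k) x0 u" using c0.conn[OF x0c uc] .
          then have "(c0.E ^^ gdist c0.E x0 u) x0 u" by (rule gdist_path)
          then obtain k' where k': "k' \<le> l' * gdist c0.E x0 u" "(E ^^ k') x0 u" using l'(2) by blast
          have "(E ^^ n) u y" using nu(3) by (rule Epow_sym)
          then have "(E ^^ (k' + n)) x0 y" using k'(2) relpowp_trans by metis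
          moreover have "k' + n \<le> l' * R + m"
          proof -
            have "l' * gdist c0.E x0 u \<le> l' * R" using gR by simp
            then show ?thesis using k'(1) nu(1) kk[of j] by linarith
          qed
          ultimately show "y \<in> ball x0 (l' * R + m)" unfolding ball_def by blast
        qed
        then have "card C \<le> card (ball x0 (l' * R + m))" using ball_fin by (meson card_mono)
        also have "\<dots> \<le> K" unfolding K_def using ball_fin by blast
        finally show "card C \<le> K" .
      qed
      show "\<exists>M\<subseteq>L. sum w M \<le> \<epsilon> * sum w L \<and> (\<forall>C\<in>components E (L - M). card C \<le> K)"
        using MsubL2 wM comps by blast
    qed
  qed
qed

end

context cay begin

lemma amen_folner:
  assumes am: "amenable G" and d: "\<delta> > 0"
  shows "\<exists>F. finite F \<and> F \<subseteq> carrier G \<and> F \<noteq> {} \<and> real (card (bd F)) \<le> \<delta> * real (card F)"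
proof (rule ccontr)
  assume "\<not> ?thesis"
  then have nf: "\<forall>F. finite F \<and> F \<subseteq> carrier G \<and> F \<noteq> {} \<longrightarrow> \<delta> * real (card F) < real (card (bd F))"
    by (meson not_le)
  obtain C where C: "finite C" "C \<subseteq> carrier G" "C \<noteq> {}"
    "\<forall>F. finite F \<and> F \<subseteq> carrier G \<longrightarrow> 2 * card F \<le> card (smul C F)"
    using nonfolner_double[OF nf d] by blast
  obtain \<phi> where phi: "\<forall>p\<in>carrier G \<times> (UNIV::bool set). \<phi> p \<in> C"
     "inj_on (\<lambda>p. \<phi> p \<otimes> fst p) (carrier G \<times> (UNIV::bool set))"
    using compact_match[OF C] by blast
  show False by (rule paradox_false[OF am C(1,2) phi])
qed

lemma amen_whf:
  assumes am: "amenable G"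
  shows "weighted_hyperfinite (carrier G) E"
  unfolding weighted_hyperfinite_def
proof (intro allI impI)
  fix \<epsilon> :: real assume eps: "\<epsilon> > 0"
  obtain F where F: "finite F" "F \<subseteq> carrier G" "F \<noteq> {}" "real (card (bd F)) \<le> \<epsilon> * real (card F)"
    using amen_folner[OF am eps] by blast
  have K: "card F > 0" using F by auto
  show "\<exists>K>0. \<forall>L. finite L \<and> L \<subseteq> carrier G \<longrightarrow> (\<forall>w. (\<forall>x\<in>L. 0 \<le> w x) \<longrightarrow>
        (\<exists>M\<subseteq>L. sum w M \<le> \<epsilon> * sum w L \<and> (\<forall>C\<in>components E (L - M). card C \<le> K)))"
  proof (intro exI[of _ "card F"] conjI K allI impI)
    fix L and w :: "'a \<Rightarrow> real" assume L: "finite L \<and> L \<subseteq> carrier G" and wnn: "\<forall>x\<in>L. 0 \<le> w x"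
    show "\<exists>M\<subseteq>L. sum w M \<le> \<epsilon> * sum w L \<and> (\<forall>C\<in>components E (L - M). card C \<le> card F)"
      using folner_hyp[OF F(1,2,3) F(4)] L wnn by blast
  qed
qed

end

theorem theorem1p2:
  fixes G :: "('a, 'b) monoid_scheme"
  assumes "group G"
    and "finitely_generated G"
    and "amenable G \<or> finite_asdim G"
  shows "\<forall>S. fin_sym_gen_set G S \<longrightarrow> weighted_hyperfinite (carrier G) (cayley_adj G S)"
proof (intro allI impI)
  fix S assume S: "fin_sym_gen_set G S"
  interpret cay G S by (rule cay.intro[OF assms(1)]) (unfold_locales, rule S)
  show "weighted_hyperfinite (carrier G) (cayley_adj G S)"
  proof (cases "amenable G")
    case True then show ?thesis by (rule amen_whf)
  next
    case False
    then have "finite_asdim G" using assms(3) by blast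
    then obtain S0 d where "fin_sym_gen_set G S0" "asdim_le (carrier G) (cayley_adj G S0) d"
      unfolding finite_asdim_def by blast
    then show ?thesis by (rule asdim_whf)
  qed
qed


end
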